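(* Let $\mathcal S\subseteq\mathsf P^n$ be the stabilizer group of a stabilizer code, let $g_1,\dots,g_m\in\mathcal S$, and in $\mathsf P_{DS}=\mathsf P^n\times\mathbb F_2^m$ let $f_i=(g_i,\hat i)$ ($\hat i$ the $i$-th standard basis vector), $\mathcal M=\langle f_1,\dots,f_m\rangle$, $\mathcal U=\mathcal M^\perp$. View $\mathcal S$ as $\{(s,0):s\in\mathcal S\}\subseteq\mathsf P_{DS}$, let $\mathcal L=\mathcal S^\perp$ (in $\mathsf P_{DS}$), and let the distance $d$ be the minimal weight (number of nonidentity coordinates among the $n+m$) of an element of $\mathcal U\setminus\mathcal S$. Let $\Gamma\subseteq 2^{[n+m]}$ with $|\gamma|\le\lfloor\frac{d-1}2\rfloor$ for all $\gamma$, and $P=\mathop{\ast}_{\gamma\in\Gamma}P_\gamma$ a distribution of errors $(e_d,e_m)\in\mathsf P_{DS}$ with each $P_\gamma$ supported on elements with support in $\gamma$ and $P_\gamma(I)>\frac12$. Let $P_m$ be the distribution on $\mathsf P_{DS}$ of $(I,e_m)$ where $(e_d,e_m)\sim P$, and $\tilde P=P\ast P_m$ (the distribution effectively observed when comparing syndromes of consecutive rounds). Then the logical channel $P_L(e)=\frac1{|\mathcal S|}\sum_{s\in\mathcal S}P(e\,(s,0))$ is uniquely determined by the syndrome statistics $\tilde E(s)=\sum_{e\in\mathsf P_{DS}}\langle s,e\rangle\tilde P(e)$, $s\in\mathcal M$ (among all such channels with the same $\Gamma$).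
   Context: $\mathsf P^n$ is the $n$-qubit Pauli group modulo phases. Bicharacter on $\mathsf P_{DS}$: $\langle(a,x),(b,y)\rangle=\langle a,b\rangle(-1)^{\sum_i x_iy_i}$, where $\langle a,b\rangle=+1$ if the Paulis $a,b$ commute and $-1$ otherwise; $B^\perp=\{c:\langle c,b\rangle=1\ \forall b\in B\}$. The support of $(e_d,e_m)$ is the set of qubit positions where $e_d$ is nonidentity together with positions $n+i$ where $e_m[i]=1$. Convolution: $(f\ast g)(a)=\sum_b f(b)g(ab)$. Phenomenological model: in each round a new error $(e_d,e_m)\sim P$ occurs, $e_d$ a data error and $e_m$ flips of the outcomes of the measurements of $g_1,\dots,g_m$. *)

theory Defs
  imports Complex_Main "HOL-Library.FuncSet"
begin

text \<open>An element of P_DS = P^n x F_2^m modulo phases is represented by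
  (x, z, e): x, z the X- and Z-parts of the data Pauli (qubit i carries
  I=(0,0), X=(1,0), Z=(0,1), Y=(1,1)) and e the measurement-flip vector.\<close>

type_synonym pds = "(nat \<Rightarrow> bool) \<times> (nat \<Rightarrow> bool) \<times> (nat \<Rightarrow> bool)"

definition xp :: "pds \<Rightarrow> nat \<Rightarrow> bool" where "xp a = fst a"
definition zp :: "pds \<Rightarrow> nat \<Rightarrow> bool" where "zp a = fst (snd a)"
definition ep :: "pds \<Rightarrow> nat \<Rightarrow> bool" where "ep a = snd (snd a)"

definition carrier :: "nat \<Rightarrow> nat \<Rightarrow> pds set" where
  "carrier n m = {a. (\<forall>i\<ge>n. \<not> xp a i \<and> \<not> zp a i) \<and> (\<forall>i\<ge>m. \<not> ep a i)}"

definition ident :: pds where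
  "ident = (\<lambda>_. False, \<lambda>_. False, \<lambda>_. False)"

definition mult :: "pds \<Rightarrow> pds \<Rightarrow> pds" where
  "mult a b = (\<lambda>i. xp a i \<noteq> xp b i, \<lambda>i. zp a i \<noteq> zp b i, \<lambda>i. ep a i \<noteq> ep b i)"

definition gprod :: "'i set \<Rightarrow> ('i \<Rightarrow> pds) \<Rightarrow> pds" where
  "gprod T c = (\<lambda>i. odd (card {t\<in>T. xp (c t) i}),
                \<lambda>i. odd (card {t\<in>T. zp (c t) i}),
                \<lambda>i. odd (card {t\<in>T. ep (c t) i}))"

text \<open>Bicharacter: commutation sign of the data Paulis times (-1)^(sum x_i y_i).
  Paulis on qubit i anticommute iff x_a z_b + z_a x_b is odd.\<close>
definition bichar :: "nat \<Rightarrow> nat \<Rightarrow> pds \<Rightarrow> pds \<Rightarrow> real" where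
  "bichar n m a b =
     (-1) ^ (card {i. i < n \<and> ((xp a i \<and> zp b i) \<noteq> (zp a i \<and> xp b i))}
           + card {i. i < m \<and> ep a i \<and> ep b i})"

definition perp :: "nat \<Rightarrow> nat \<Rightarrow> pds set \<Rightarrow> pds set" where
  "perp n m B = {c \<in> carrier n m. \<forall>b\<in>B. bichar n m c b = 1}"

definition supp :: "nat \<Rightarrow> nat \<Rightarrow> pds \<Rightarrow> nat set" where
  "supp n m a = {i. i < n \<and> (xp a i \<or> zp a i)} \<union> {n + i | i. i < m \<and> ep a i}"

definition weight :: "nat \<Rightarrow> nat \<Rightarrow> pds \<Rightarrow> nat" where
  "weight n m a = card (supp n m a)"

definition stabilizer_group :: "nat \<Rightarrow> pds set \<Rightarrow> bool" where
  "stabilizer_group n S \<longleftrightarrow> S \<subseteq> carrier n 0 \<and> ident \<in> S \<and>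
     (\<forall>a\<in>S. \<forall>b\<in>S. mult a b \<in> S) \<and> (\<forall>a\<in>S. \<forall>b\<in>S. bichar n 0 a b = 1)"

definition fgen :: "(nat \<Rightarrow> pds) \<Rightarrow> nat \<Rightarrow> pds" where
  "fgen g i = (xp (g i), zp (g i), \<lambda>j. j = i)"

definition Mgrp :: "nat \<Rightarrow> (nat \<Rightarrow> pds) \<Rightarrow> pds set" where
  "Mgrp m g = {gprod T (fgen g) | T. T \<subseteq> {..<m}}"

definition Ugrp :: "nat \<Rightarrow> nat \<Rightarrow> (nat \<Rightarrow> pds) \<Rightarrow> pds set" where
  "Ugrp n m g = perp n m (Mgrp m g)"

definition code_distance :: "nat \<Rightarrow> nat \<Rightarrow> pds set \<Rightarrow> (nat \<Rightarrow> pds) \<Rightarrow> nat" where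
  "code_distance n m S g = Inf (weight n m ` (Ugrp n m g - S))"

definition is_dist :: "nat \<Rightarrow> nat \<Rightarrow> (pds \<Rightarrow> real) \<Rightarrow> bool" where
  "is_dist n m p \<longleftrightarrow> (\<forall>a. p a \<ge> 0) \<and> (\<forall>a. a \<notin> carrier n m \<longrightarrow> p a = 0)
      \<and> sum p (carrier n m) = 1"

definition conv :: "nat \<Rightarrow> nat \<Rightarrow> (pds \<Rightarrow> real) \<Rightarrow> (pds \<Rightarrow> real) \<Rightarrow> pds \<Rightarrow> real" where
  "conv n m f h a = (\<Sum>b\<in>carrier n m. f b * h (mult a b))"

text \<open>Convolution of the family P_gamma, gamma in Gamma (the iterated convolution,
  written out: sum over all tuples of elements whose product is a).\<close>
definition conv_family :: "nat \<Rightarrow> nat \<Rightarrow> nat set set \<Rightarrow> (nat set \<Rightarrow> pds \<Rightarrow> real) \<Rightarrow> pds \<Rightarrow> real" where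
  "conv_family n m \<Gamma> Pf a =
     (\<Sum>c\<in>PiE \<Gamma> (\<lambda>_. carrier n m). if gprod \<Gamma> c = a then (\<Prod>\<gamma>\<in>\<Gamma>. Pf \<gamma> (c \<gamma>)) else 0)"

definition meas_part :: "nat \<Rightarrow> nat \<Rightarrow> (pds \<Rightarrow> real) \<Rightarrow> pds \<Rightarrow> real" where
  "meas_part n m p a =
     (if (\<forall>i. \<not> xp a i \<and> \<not> zp a i)
      then (\<Sum>b\<in>{b\<in>carrier n m. ep b = ep a}. p b) else 0)"

definition tilde :: "nat \<Rightarrow> nat \<Rightarrow> (pds \<Rightarrow> real) \<Rightarrow> pds \<Rightarrow> real" where
  "tilde n m p = conv n m p (meas_part n m p)"

definition synd_stat :: "nat \<Rightarrow> nat \<Rightarrow> (pds \<Rightarrow> real) \<Rightarrow> pds \<Rightarrow> real" where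
  "synd_stat n m p s = (\<Sum>e\<in>carrier n m. bichar n m s e * p e)"

definition logical_channel :: "pds set \<Rightarrow> (pds \<Rightarrow> real) \<Rightarrow> pds \<Rightarrow> real" where
  "logical_channel S p e = (1 / real (card S)) * (\<Sum>s\<in>S. p (mult e s))"

definition admissible :: "nat \<Rightarrow> nat \<Rightarrow> nat set set \<Rightarrow> (nat set \<Rightarrow> pds \<Rightarrow> real) \<Rightarrow> bool" where
  "admissible n m \<Gamma> Pf \<longleftrightarrow> (\<forall>\<gamma>\<in>\<Gamma>. is_dist n m (Pf \<gamma>)
      \<and> (\<forall>a. Pf \<gamma> a \<noteq> 0 \<longrightarrow> supp n m a \<subseteq> \<gamma>) \<and> Pf \<gamma> ident > 1/2)"

end

theory Submission
  imports Defs
begin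


lemma pds_eq: "(a::pds) = b \<longleftrightarrow> xp a = xp b \<and> zp a = zp b \<and> ep a = ep b"
  by (auto simp: xp_def zp_def ep_def prod_eq_iff)

lemma mult_simps[simp]:
  "xp (mult a b) i = (xp a i \<noteq> xp b i)" "zp (mult a b) i = (zp a i \<noteq> zp b i)"
  "ep (mult a b) i = (ep a i \<noteq> ep b i)"
  by (auto simp: mult_def xp_def zp_def ep_def)

lemma ident_simps[simp]: "xp ident i = False" "zp ident i = False" "ep ident i = False"
  by (auto simp: ident_def xp_def zp_def ep_def)

lemma mult_comm: "mult a b = mult b a" by (auto simp: pds_eq)
lemma mult_assoc: "mult (mult a b) c = mult a (mult b c)" by (auto simp: pds_eq)
lemma mult_self[simp]: "mult a a = ident" by (auto simp: pds_eq)
lemma mult_ident[simp]: "mult a ident = a" "mult ident a = a" by (auto simp: pds_eq)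
lemma mult_cancel[simp]: "mult (mult a b) b = a" "mult a (mult a b) = b" by (auto simp: pds_eq)
lemma mult_eq_ident: "mult a b = ident \<longleftrightarrow> a = b" by (auto simp: pds_eq fun_eq_iff)

lemma carrier_mult: "a \<in> carrier n m \<Longrightarrow> b \<in> carrier n m \<Longrightarrow> mult a b \<in> carrier n m"
  by (auto simp: carrier_def)
lemma ident_carrier[simp]: "ident \<in> carrier n m" by (auto simp: carrier_def)

lemma sign_prod: "finite A \<Longrightarrow> (\<Prod>i\<in>A. if P i then -1 else (1::real)) = (-1) ^ card {i\<in>A. P i}"
  by (simp add: prod.If_cases Int_def)

definition sg :: "bool \<Rightarrow> real" where "sg b = (if b then -1 else 1)"

lemma sg_xor: "sg (p \<noteq> q) = sg p * sg q" by (auto simp: sg_def)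

lemma bichar_prod: "bichar n m a b =
   (\<Prod>i<n. sg ((xp a i \<and> zp b i) \<noteq> (zp a i \<and> xp b i))) * (\<Prod>i<m. sg (ep a i \<and> ep b i))"
proof -
  have 1: "(\<Prod>i<n. sg ((xp a i \<and> zp b i) \<noteq> (zp a i \<and> xp b i))) = (-1) ^ card {i. i < n \<and> ((xp a i \<and> zp b i) \<noteq> (zp a i \<and> xp b i))}"
    unfolding sg_def by (subst sign_prod) (auto intro!: arg_cong[where f="\<lambda>A. (-1::real)^card A"])
  have 2: "(\<Prod>i<m. sg (ep a i \<and> ep b i)) = (-1) ^ card {i. i < m \<and> ep a i \<and> ep b i}"
    unfolding sg_def by (subst sign_prod) (auto intro!: arg_cong[where f="\<lambda>A. (-1::real)^card A"])
  show ?thesis unfolding bichar_def 1 2 by (simp add: power_add)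
qed

lemma bichar_sym: "bichar n m a b = bichar n m b a"
  unfolding bichar_prod by (intro arg_cong2[where f="(*)"] prod.cong) (auto simp: sg_def)

lemma bool_xor1: "((xa \<and> (zb\<noteq>zc)) \<noteq> (za \<and> (xb\<noteq>xc))) = (((xa\<and>zb)\<noteq>(za\<and>xb)) \<noteq> ((xa\<and>zc)\<noteq>(za\<and>xc)))"
  by (cases xa; cases za; cases zb; cases zc; cases xb; cases xc; simp)
lemma bool_xor2: "(ea \<and> (eb\<noteq>ec)) = ((ea \<and> eb) \<noteq> (ea \<and> ec))" by (cases ea; simp)

lemma bichar_mult: "bichar n m a (mult b c) = bichar n m a b * bichar n m a c"
proof -
  have "bichar n m a (mult b c) =
   (\<Prod>i<n. sg ((xp a i \<and> zp b i) \<noteq> (zp a i \<and> xp b i)) * sg ((xp a i \<and> zp c i) \<noteq> (zp a i \<and> xp c i)))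
   * (\<Prod>i<m. sg (ep a i \<and> ep b i) * sg (ep a i \<and> ep c i))"
    unfolding bichar_prod by (intro arg_cong2[where f="(*)"] prod.cong refl) (simp_all only: mult_simps bool_xor1 bool_xor2 sg_xor mult_ac)
  thus ?thesis unfolding bichar_prod prod.distrib by simp
qed

lemma bichar_mult1: "bichar n m (mult b c) a = bichar n m b a * bichar n m c a"
proof -
  have "bichar n m (mult b c) a = bichar n m a (mult b c)" by (rule bichar_sym)
  also have "\<dots> = bichar n m a b * bichar n m a c" by (rule bichar_mult)
  finally show ?thesis by (simp add: bichar_sym[of n m a b] bichar_sym[of n m a c])
qed

lemma bichar_ident[simp]: "bichar n m a ident = 1" "bichar n m ident a = 1"
  by (simp_all add: bichar_def)

lemma bichar_pm: "bichar n m a b = 1 \<or> bichar n m a b = -1"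
  unfolding bichar_def by (cases "even (card {i. i < n \<and> ((xp a i \<and> zp b i) \<noteq> (zp a i \<and> xp b i))} + card {i. i < m \<and> ep a i \<and> ep b i})") simp_all

lemma bichar_sq: "bichar n m a b * bichar n m a b = 1"
  using bichar_pm[of n m a b] by auto

lemma finite_carrier: "finite (carrier n m)"
proof -
  have "carrier n m \<subseteq> (\<lambda>(A,B,C). ((\<lambda>i. i \<in> A), (\<lambda>i. i \<in> B), (\<lambda>i. i \<in> C))) ` (Pow {..<n} \<times> Pow {..<n} \<times> Pow {..<m})"
  proof
    fix a assume a: "a \<in> carrier n m"
    show "a \<in> (\<lambda>(A,B,C). ((\<lambda>i. i \<in> A), (\<lambda>i. i \<in> B), (\<lambda>i. i \<in> C))) ` (Pow {..<n} \<times> Pow {..<n} \<times> Pow {..<m})"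
      apply (rule image_eqI[where x="({i. xp a i}, {i. zp a i}, {i. ep a i})"])
      using a by (auto simp: carrier_def xp_def zp_def ep_def not_less[symmetric])
  qed
  thus ?thesis by (rule finite_subset) auto
qed



lemma sum_flip_zero:
  assumes "finite A" "\<And>a b. a \<in> A \<Longrightarrow> b \<in> A \<Longrightarrow> mult a b \<in> A" "e0 \<in> A"
    "\<And>u. u \<in> A \<Longrightarrow> f (mult u e0) = - f u"
  shows "sum f A = (0::real)"
proof -
  have "sum f A = sum (\<lambda>u. f (mult u e0)) A"
    by (rule sum.reindex_bij_witness[of _ "\<lambda>u. mult u e0" "\<lambda>u. mult u e0"]) (auto simp: assms)
  also have "\<dots> = - sum f A" using assms(4) by (simp add: sum_negf)
  finally show ?thesis by simp
qed

definition H :: "nat \<Rightarrow> nat \<Rightarrow> nat set \<Rightarrow> pds set" where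
  "H n m \<gamma> = {a \<in> carrier n m. supp n m a \<subseteq> \<gamma>}"

lemma supp_mult: "supp n m (mult a b) \<subseteq> supp n m a \<union> supp n m b"
  by (auto simp: supp_def)

lemma H_mult: "a \<in> H n m \<gamma> \<Longrightarrow> b \<in> H n m \<gamma> \<Longrightarrow> mult a b \<in> H n m \<gamma>"
  unfolding H_def using supp_mult[of n m a b] carrier_mult by blast

lemma ident_H[simp]: "ident \<in> H n m \<gamma>" by (auto simp: H_def supp_def)

lemma finite_H[simp]: "finite (H n m \<gamma>)"
  by (rule finite_subset[OF _ finite_carrier]) (auto simp: H_def)

lemma H_carrier: "H n m \<gamma> \<subseteq> carrier n m" by (auto simp: H_def)

definition Zq :: "nat \<Rightarrow> pds" where "Zq i = (\<lambda>_. False, \<lambda>j. j = i, \<lambda>_. False)"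
definition Xq :: "nat \<Rightarrow> pds" where "Xq i = (\<lambda>j. j = i, \<lambda>_. False, \<lambda>_. False)"
definition Eq :: "nat \<Rightarrow> pds" where "Eq i = (\<lambda>_. False, \<lambda>_. False, \<lambda>j. j = i)"

lemma bichar_Zq: "i < n \<Longrightarrow> bichar n m (Zq i) w = (if xp w i then -1 else 1)"
proof -
  assume i: "i < n"
  have 1: "{j. j < n \<and> ((xp (Zq i) j \<and> zp w j) \<noteq> (zp (Zq i) j \<and> xp w j))} = (if xp w i then {i} else {})"
    using i by (auto simp: Zq_def xp_def zp_def)
  have 2: "{j. j < m \<and> ep (Zq i) j \<and> ep w j} = {}" by (auto simp: Zq_def ep_def)
  show ?thesis unfolding bichar_def 1 2 by auto
qed

lemma bichar_Xq: "i < n \<Longrightarrow> bichar n m (Xq i) w = (if zp w i then -1 else 1)"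
proof -
  assume i: "i < n"
  have 1: "{j. j < n \<and> ((xp (Xq i) j \<and> zp w j) \<noteq> (zp (Xq i) j \<and> xp w j))} = (if zp w i then {i} else {})"
    using i by (auto simp: Xq_def xp_def zp_def)
  have 2: "{j. j < m \<and> ep (Xq i) j \<and> ep w j} = {}" by (auto simp: Xq_def ep_def)
  show ?thesis unfolding bichar_def 1 2 by auto
qed

lemma bichar_Eq: "i < m \<Longrightarrow> bichar n m (Eq i) w = (if ep w i then -1 else 1)"
proof -
  assume i: "i < m"
  have 1: "{j. j < n \<and> ((xp (Eq i) j \<and> zp w j) \<noteq> (zp (Eq i) j \<and> xp w j))} = {}"
    by (auto simp: Eq_def xp_def zp_def)
  have 2: "{j. j < m \<and> ep (Eq i) j \<and> ep w j} = (if ep w i then {i} else {})"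
    using i by (auto simp: Eq_def ep_def)
  show ?thesis unfolding bichar_def 1 2 by auto
qed

lemma nondegen_H:
  assumes w: "w \<in> H n m \<gamma>" and ne: "w \<noteq> ident"
  shows "\<exists>e0\<in>H n m \<gamma>. bichar n m e0 w = -1"
proof -
  have wc: "w \<in> carrier n m" and ws: "supp n m w \<subseteq> \<gamma>" using w by (auto simp: H_def)
  from ne obtain i where "xp w i \<or> zp w i \<or> ep w i" by (auto simp: pds_eq fun_eq_iff)
  then consider "xp w i" | "zp w i" | "ep w i" by blast
  then show ?thesis
  proof cases
    case 1
    with wc have i: "i < n" by (auto simp: carrier_def not_le[symmetric])
    with 1 ws have "i \<in> \<gamma>" by (auto simp: supp_def)
    with i have "Zq i \<in> H n m \<gamma>"
      by (auto simp: H_def carrier_def supp_def Zq_def xp_def zp_def ep_def)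
    thus ?thesis using bichar_Zq[OF i, of m w] 1 by auto
  next
    case 2
    with wc have i: "i < n" by (auto simp: carrier_def not_le[symmetric])
    with 2 ws have "i \<in> \<gamma>" by (auto simp: supp_def)
    with i have "Xq i \<in> H n m \<gamma>"
      by (auto simp: H_def carrier_def supp_def Xq_def xp_def zp_def ep_def)
    thus ?thesis using bichar_Xq[OF i, of m w] 2 by auto
  next
    case 3
    with wc have i: "i < m" by (auto simp: carrier_def not_le[symmetric])
    with 3 ws have "n + i \<in> \<gamma>" by (auto simp: supp_def)
    with i have "Eq i \<in> H n m \<gamma>"
      by (auto simp: H_def carrier_def supp_def Eq_def xp_def zp_def ep_def)
    thus ?thesis using bichar_Eq[OF i, of n w] 3 by auto
  qed
qed

lemma char_sum_H:
  assumes w: "w \<in> H n m \<gamma>"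
  shows "(\<Sum>u\<in>H n m \<gamma>. bichar n m u w) = (if w = ident then real (card (H n m \<gamma>)) else 0)"
proof (cases "w = ident")
  case True thus ?thesis by simp
next
  case False
  then obtain e0 where e0: "e0 \<in> H n m \<gamma>" "bichar n m e0 w = -1" using nondegen_H[OF w] by blast
  have "(\<Sum>u\<in>H n m \<gamma>. bichar n m u w) = 0"
    by (rule sum_flip_zero[OF finite_H _ e0(1)]) (auto simp: H_mult bichar_mult1 e0(2))
  with False show ?thesis by simp
qed

lemma H_UNIV: "H n m UNIV = carrier n m" by (auto simp: H_def)



lemma synd_conv: "synd_stat n m (conv n m f h) u = synd_stat n m f u * synd_stat n m h u"
proof -
  let ?G = "carrier n m"
  have inner: "(\<Sum>a\<in>?G. bichar n m u a * h (mult a b)) = bichar n m u b * synd_stat n m h u"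
    if b: "b \<in> ?G" for b
  proof -
    have "(\<Sum>a\<in>?G. bichar n m u a * h (mult a b)) = (\<Sum>c\<in>?G. bichar n m u (mult c b) * h c)"
      by (rule sum.reindex_bij_witness[of _ "\<lambda>u. mult u b" "\<lambda>u. mult u b"]) (auto simp: b carrier_mult)
    also have "\<dots> = bichar n m u b * synd_stat n m h u"
      by (simp add: bichar_mult synd_stat_def sum_distrib_left mult_ac)
    finally show ?thesis .
  qed
  have "synd_stat n m (conv n m f h) u = (\<Sum>a\<in>?G. \<Sum>b\<in>?G. f b * (bichar n m u a * h (mult a b)))"
    by (simp add: synd_stat_def conv_def sum_distrib_left mult_ac)
  also have "\<dots> = (\<Sum>b\<in>?G. f b * (\<Sum>a\<in>?G. bichar n m u a * h (mult a b)))"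
    by (subst sum.swap) (simp add: sum_distrib_left)
  also have "\<dots> = (\<Sum>b\<in>?G. f b * (bichar n m u b * synd_stat n m h u))"
    by (rule sum.cong[OF refl]) (simp add: inner)
  also have "\<dots> = synd_stat n m f u * synd_stat n m h u"
    by (simp add: synd_stat_def sum_distrib_right mult_ac)
  finally show ?thesis .
qed

lemma gprod_empty[simp]: "gprod {} c = ident"
  by (simp add: gprod_def ident_def)

lemma gprod_simps:
  "xp (gprod T c) i = odd (card {t\<in>T. xp (c t) i})"
  "zp (gprod T c) i = odd (card {t\<in>T. zp (c t) i})"
  "ep (gprod T c) i = odd (card {t\<in>T. ep (c t) i})"
  by (simp_all add: gprod_def xp_def zp_def ep_def)

lemma gprod_insert:
  assumes "finite T" "t \<notin> T"
  shows "gprod (insert t T) c = mult (c t) (gprod T c)"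
proof -
  have key: "odd (card {t'\<in>insert t T. P t'}) = (P t \<noteq> odd (card {t'\<in>T. P t'}))" for P
  proof -
    have "{t'\<in>insert t T. P t'} = (if P t then insert t {t'\<in>T. P t'} else {t'\<in>T. P t'})" by auto
    thus ?thesis using assms by auto
  qed
  show ?thesis unfolding pds_eq fun_eq_iff mult_simps gprod_simps
    using key[of "\<lambda>t. xp (c t) _"] key[of "\<lambda>t. zp (c t) _"] key[of "\<lambda>t. ep (c t) _"] by blast
qed

lemma bichar_gprod: "finite T \<Longrightarrow> bichar n m u (gprod T c) = (\<Prod>t\<in>T. bichar n m u (c t))"
  by (induction T rule: finite_induct) (simp_all add: gprod_insert bichar_mult)

lemma gprod_carrier: "finite T \<Longrightarrow> (\<And>t. t \<in> T \<Longrightarrow> c t \<in> carrier n m) \<Longrightarrow> gprod T c \<in> carrier n m"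
  by (induction T rule: finite_induct) (simp_all add: gprod_insert carrier_mult)

lemma gprod_single[simp]: "gprod {t} c = c t"
  using gprod_insert[of "{}" t c] by simp

lemma synd_conv_family:
  assumes fin: "finite \<Gamma>"
  shows "synd_stat n m (conv_family n m \<Gamma> Pf) u = (\<Prod>\<gamma>\<in>\<Gamma>. synd_stat n m (Pf \<gamma>) u)"
proof -
  let ?G = "carrier n m" let ?PI = "PiE \<Gamma> (\<lambda>_. carrier n m)"
  have gc: "gprod \<Gamma> c \<in> ?G" if "c \<in> ?PI" for c
    using that by (intro gprod_carrier[OF fin]) auto
  have "synd_stat n m (conv_family n m \<Gamma> Pf) u =
     (\<Sum>a\<in>?G. \<Sum>c\<in>?PI. (if gprod \<Gamma> c = a then bichar n m u a * (\<Prod>\<gamma>\<in>\<Gamma>. Pf \<gamma> (c \<gamma>)) else 0))"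
    by (simp add: synd_stat_def conv_family_def sum_distrib_left if_distrib cong: if_cong)
  also have "\<dots> = (\<Sum>c\<in>?PI. \<Sum>a\<in>?G. (if gprod \<Gamma> c = a then bichar n m u a * (\<Prod>\<gamma>\<in>\<Gamma>. Pf \<gamma> (c \<gamma>)) else 0))"
    by (rule sum.swap)
  also have "\<dots> = (\<Sum>c\<in>?PI. bichar n m u (gprod \<Gamma> c) * (\<Prod>\<gamma>\<in>\<Gamma>. Pf \<gamma> (c \<gamma>)))"
    by (rule sum.cong[OF refl]) (simp add: sum.delta' gc finite_carrier)
  also have "\<dots> = (\<Sum>c\<in>?PI. \<Prod>\<gamma>\<in>\<Gamma>. bichar n m u (c \<gamma>) * Pf \<gamma> (c \<gamma>))"
    by (simp add: bichar_gprod[OF fin] prod.distrib)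
  also have "\<dots> = (\<Prod>\<gamma>\<in>\<Gamma>. \<Sum>e\<in>?G. bichar n m u e * Pf \<gamma> e)"
    by (rule prod_sum_PiE[symmetric]) (simp_all add: fin finite_carrier)
  finally show ?thesis by (simp add: synd_stat_def)
qed

definition mu :: "pds \<Rightarrow> pds" where "mu a = (\<lambda>_. False, \<lambda>_. False, ep a)"

lemma mu_simps[simp]: "xp (mu a) i = False" "zp (mu a) i = False" "ep (mu a) i = ep a i"
  by (auto simp: mu_def xp_def zp_def ep_def)

lemma mu_mu[simp]: "mu (mu a) = mu a" by (simp add: pds_eq fun_eq_iff)

lemma mu_carrier: "a \<in> carrier n m \<Longrightarrow> mu a \<in> carrier n m" by (auto simp: carrier_def)

lemma bichar_mu: "bichar n m u (mu b) = bichar n m (mu u) b"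
  by (simp add: bichar_def)

lemma synd_meas_part: "synd_stat n m (meas_part n m p) u = synd_stat n m p (mu u)"
proof -
  let ?G = "carrier n m"
  have eqv: "((\<forall>i. \<not> xp a i \<and> \<not> zp a i) \<and> ep b = ep a) = (a = mu b)" for a b
    by (auto simp: pds_eq fun_eq_iff)
  have pa: "bichar n m u a * meas_part n m p a =
     (\<Sum>b\<in>?G. if (\<forall>i. \<not> xp a i \<and> \<not> zp a i) \<and> ep b = ep a then bichar n m u a * p b else 0)" for a
  proof (cases "\<forall>i. \<not> xp a i \<and> \<not> zp a i")
    case True
    have "meas_part n m p a = (\<Sum>b\<in>?G. if ep b = ep a then p b else 0)"
      using True by (simp add: meas_part_def sum.inter_filter[OF finite_carrier])
    thus ?thesis using True by (simp add: sum_distrib_left if_distrib cong: if_cong)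
  next
    case False
    show ?thesis by (simp only: meas_part_def False if_False simp_thms mult_zero_right sum.neutral_const)
  qed
  have "synd_stat n m (meas_part n m p) u =
     (\<Sum>a\<in>?G. \<Sum>b\<in>?G. if (\<forall>i. \<not> xp a i \<and> \<not> zp a i) \<and> ep b = ep a then bichar n m u a * p b else 0)"
    unfolding synd_stat_def using pa by simp
  also have "\<dots> = (\<Sum>b\<in>?G. \<Sum>a\<in>?G. if a = mu b then bichar n m u a * p b else 0)"
    by (subst sum.swap) (simp only: eqv)
  also have "\<dots> = (\<Sum>b\<in>?G. bichar n m u (mu b) * p b)"
    by (rule sum.cong[OF refl]) (simp add: sum.delta' mu_carrier finite_carrier)
  finally show ?thesis by (simp add: synd_stat_def bichar_mu)
qed

lemma synd_tilde: "synd_stat n m (tilde n m p) u = synd_stat n m p u * synd_stat n m p (mu u)"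
  by (simp add: tilde_def synd_conv synd_meas_part)

lemma synd_pos:
  assumes d: "is_dist n m p" and h: "p ident > 1/2"
  shows "synd_stat n m p u > 0"
proof -
  let ?G = "carrier n m"
  have "(\<Sum>e\<in>?G. (if e = ident then 2 * p e else 0) - p e) \<le> synd_stat n m p u"
    unfolding synd_stat_def
  proof (rule sum_mono)
    fix e assume "e \<in> ?G"
    have "p e \<ge> 0" using d unfolding is_dist_def by blast
    thus "(if e = ident then 2 * p e else 0) - p e \<le> bichar n m u e * p e"
      using bichar_pm[of n m u e] by auto
  qed
  moreover have "(\<Sum>e\<in>?G. (if e = ident then 2 * p e else 0) - p e) = 2 * p ident - 1"
    using d by (simp add: sum_subtractf sum.delta finite_carrier is_dist_def)
  ultimately show ?thesis using h by linarith
qed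



definition proj :: "nat \<Rightarrow> nat set \<Rightarrow> pds \<Rightarrow> pds" where
  "proj n \<gamma> u = (\<lambda>i. xp u i \<and> i \<in> \<gamma>, \<lambda>i. zp u i \<and> i \<in> \<gamma>, \<lambda>i. ep u i \<and> n + i \<in> \<gamma>)"

lemma proj_simps[simp]: "xp (proj n \<gamma> u) i = (xp u i \<and> i \<in> \<gamma>)" "zp (proj n \<gamma> u) i = (zp u i \<and> i \<in> \<gamma>)"
   "ep (proj n \<gamma> u) i = (ep u i \<and> n + i \<in> \<gamma>)"
  by (auto simp: proj_def xp_def zp_def ep_def)

lemma proj_H: "u \<in> carrier n m \<Longrightarrow> proj n \<gamma> u \<in> H n m \<gamma>"
  by (auto simp: H_def carrier_def supp_def)

lemma bichar_proj: assumes e: "e \<in> H n m \<gamma>" shows "bichar n m (proj n \<gamma> u) e = bichar n m u e"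
proof -
  have s: "supp n m e \<subseteq> \<gamma>" using e by (auto simp: H_def)
  have 1: "{i. i < n \<and> ((xp (proj n \<gamma> u) i \<and> zp e i) \<noteq> (zp (proj n \<gamma> u) i \<and> xp e i))}
         = {i. i < n \<and> ((xp u i \<and> zp e i) \<noteq> (zp u i \<and> xp e i))}"
    using s by (auto simp: supp_def)
  have 2: "{i. i < m \<and> ep (proj n \<gamma> u) i \<and> ep e i} = {i. i < m \<and> ep u i \<and> ep e i}"
    using s by (auto simp: supp_def)
  show ?thesis unfolding bichar_def 1 2 ..
qed

lemma synd_local:
  assumes "\<forall>a. p a \<noteq> 0 \<longrightarrow> supp n m a \<subseteq> \<gamma>"
  shows "synd_stat n m p (proj n \<gamma> u) = synd_stat n m p u"
  unfolding synd_stat_def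
proof (rule sum.cong[OF refl])
  fix e assume e: "e \<in> carrier n m"
  show "bichar n m (proj n \<gamma> u) e * p e = bichar n m u e * p e"
  proof (cases "p e = 0")
    case False
    hence "e \<in> H n m \<gamma>" using assms e unfolding H_def by blast
    thus ?thesis by (simp add: bichar_proj)
  qed simp
qed

lemma fourier_expand:
  assumes loc: "\<forall>u\<in>carrier n m. \<Phi> (proj n \<gamma> u) = \<Phi> u"
  shows "\<exists>c. \<forall>u\<in>carrier n m. \<Phi> u = (\<Sum>x\<in>H n m \<gamma>. c x * bichar n m u x)"
proof -
  let ?H = "H n m \<gamma>"
  define c where "c x = (1 / real (card ?H)) * (\<Sum>v\<in>?H. \<Phi> v * bichar n m v x)" for x
  have cardpos: "real (card ?H) > 0" using ident_H[of n m \<gamma>] finite_H[of n m \<gamma>]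
    by (metis card_gt_0_iff empty_iff of_nat_0_less_iff)
  have "\<Phi> u = (\<Sum>x\<in>?H. c x * bichar n m u x)" if u: "u \<in> carrier n m" for u
  proof -
    let ?p = "proj n \<gamma> u"
    have pH: "?p \<in> ?H" using proj_H[OF u] .
    have inner: "(\<Sum>x\<in>?H. bichar n m v x * bichar n m u x) = (if v = ?p then real (card ?H) else 0)"
      if v: "v \<in> ?H" for v
    proof -
      have "(\<Sum>x\<in>?H. bichar n m v x * bichar n m u x) = (\<Sum>x\<in>?H. bichar n m x (mult v ?p))"
      proof (rule sum.cong[OF refl])
        fix x assume x: "x \<in> ?H"
        have "bichar n m v x * bichar n m u x = bichar n m x v * bichar n m x ?p"
          using bichar_proj[OF x, of u] by (simp add: bichar_sym)
        also have "\<dots> = bichar n m x (mult v ?p)" by (simp add: bichar_mult)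
        finally show "bichar n m v x * bichar n m u x = bichar n m x (mult v ?p)" .
      qed
      also have "\<dots> = (if mult v ?p = ident then real (card ?H) else 0)"
        by (rule char_sum_H) (simp add: H_mult v pH)
      finally show ?thesis by (simp add: mult_eq_ident)
    qed
    have "(\<Sum>x\<in>?H. c x * bichar n m u x) =
        (1 / real (card ?H)) * (\<Sum>v\<in>?H. \<Phi> v * (\<Sum>x\<in>?H. bichar n m v x * bichar n m u x))"
    proof -
      have "(\<Sum>x\<in>?H. c x * bichar n m u x) =
          (1 / real (card ?H)) * (\<Sum>x\<in>?H. \<Sum>v\<in>?H. \<Phi> v * (bichar n m v x * bichar n m u x))"
        unfolding c_def by (simp add: sum_distrib_left sum_distrib_right mult_ac)
      also have "\<dots> = (1 / real (card ?H)) * (\<Sum>v\<in>?H. \<Sum>x\<in>?H. \<Phi> v * (bichar n m v x * bichar n m u x))"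
        by (subst sum.swap) (rule refl)
      finally show ?thesis by (simp add: sum_distrib_left)
    qed
    also have "\<dots> = (1 / real (card ?H)) * (\<Sum>v\<in>?H. \<Phi> v * (if v = ?p then real (card ?H) else 0))"
      by (simp add: inner)
    also have "\<dots> = \<Phi> ?p"
      using cardpos pH by (auto simp: if_distrib[of "\<lambda>x. _ * x"] sum.delta cong: if_cong)
    also have "\<dots> = \<Phi> u" using loc u by simp
    finally show ?thesis by simp
  qed
  thus ?thesis by blast
qed

lemma U_mult: "a \<in> Ugrp n m g \<Longrightarrow> b \<in> Ugrp n m g \<Longrightarrow> mult a b \<in> Ugrp n m g"
  by (auto simp: Ugrp_def perp_def carrier_mult bichar_mult1)

lemma ident_U: "ident \<in> Ugrp n m g"
  by (auto simp: Ugrp_def perp_def)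

lemma U_carrier: "Ugrp n m g \<subseteq> carrier n m"
  by (auto simp: Ugrp_def perp_def)

lemma U_iff:
  assumes w: "w \<in> carrier n m"
  shows "w \<in> Ugrp n m g \<longleftrightarrow> (\<forall>t<m. bichar n m w (fgen g t) = 1)"
proof
  assume "w \<in> Ugrp n m g"
  moreover have "fgen g t \<in> Mgrp m g" if "t < m" for t
    unfolding Mgrp_def using that by (intro CollectI exI[of _ "{t}"]) auto
  ultimately show "\<forall>t<m. bichar n m w (fgen g t) = 1" by (auto simp: Ugrp_def perp_def)
next
  assume h: "\<forall>t<m. bichar n m w (fgen g t) = 1"
  have "bichar n m w s = 1" if "s \<in> Mgrp m g" for s
  proof -
    obtain T where T: "T \<subseteq> {..<m}" "s = gprod T (fgen g)" using \<open>s \<in> Mgrp m g\<close> by (auto simp: Mgrp_def)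
    have fT: "finite T" using T(1) finite_subset by blast
    show ?thesis using T h by (auto simp: bichar_gprod[OF fT] intro!: prod.neutral)
  qed
  thus "w \<in> Ugrp n m g" using w by (auto simp: Ugrp_def perp_def)
qed

lemma orth_M:
  assumes w: "w \<in> carrier n m"
  shows "(\<Sum>T\<in>Pow {..<m}. bichar n m (gprod T (fgen g)) w) = (if w \<in> Ugrp n m g then 2 ^ m else 0)"
proof -
  let ?x = "\<lambda>t. bichar n m w (fgen g t)"
  have "(\<Sum>T\<in>Pow {..<m}. bichar n m (gprod T (fgen g)) w) = (\<Sum>T\<in>Pow {..<m}. (\<Prod>t\<in>T. ?x t) * (\<Prod>t\<in>{..<m}-T. 1))"
  proof (rule sum.cong[OF refl])
    fix T assume "T \<in> Pow {..<m}"
    hence fT: "finite T" using finite_subset by blast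
    show "bichar n m (gprod T (fgen g)) w = (\<Prod>t\<in>T. ?x t) * (\<Prod>t\<in>{..<m}-T. 1)"
      by (simp add: bichar_sym[of n m _ w] bichar_gprod[OF fT])
  qed
  also have "\<dots> = (\<Prod>t<m. ?x t + 1)" by (rule prod_add[symmetric]) simp
  also have "\<dots> = (if w \<in> Ugrp n m g then 2 ^ m else 0)"
  proof (cases "w \<in> Ugrp n m g")
    case True
    hence "\<forall>t<m. ?x t = 1" using U_iff[OF w] by blast
    thus ?thesis using True by simp
  next
    case False
    then obtain t where t: "t < m" "?x t \<noteq> 1" using U_iff[OF w] by blast
    hence "?x t + 1 = 0" using bichar_pm[of n m w "fgen g t"] by auto
    thus ?thesis using False t by (auto intro!: prod_zero)
  qed
  finally show ?thesis .
qed



lemma core: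
  fixes J :: "'j set" and c :: "'j \<Rightarrow> real" and e :: "'j \<Rightarrow> pds"
  assumes fin: "finite J" and eG: "\<forall>j\<in>J. e j \<in> carrier n m"
    and hyp: "\<forall>T\<subseteq>{..<m}. (\<Sum>j\<in>J. c j * bichar n m (gprod T (fgen g)) (e j)) = 0"
    and cls: "\<forall>j\<in>J. \<forall>j'\<in>J. mult (e j) (e j') \<in> Ugrp n m g \<longrightarrow> bichar n m u (e j) = bichar n m u (e j')"
  shows "(\<Sum>j\<in>J. c j * bichar n m u (e j)) = 0"
proof -
  define \<delta> where "\<delta> j j' = (if mult (e j) (e j') \<in> Ugrp n m g then 1 else 0 :: real)" for j j'
  have dsym: "\<delta> j j' = \<delta> j' j" for j j' by (simp add: \<delta>_def mult_comm)
  have drefl: "\<delta> j j = 1" for j by (simp add: \<delta>_def ident_U)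
  have dtrans: "\<delta> j k = 1" if "\<delta> j l = 1" "\<delta> l k = 1" for j k l
  proof -
    have "mult (e j) (e k) = mult (mult (e j) (e l)) (mult (e l) (e k))" by (simp add: mult_assoc)
    thus ?thesis using that U_mult by (auto simp: \<delta>_def split: if_splits)
  qed
  have d01: "\<delta> j j' = 0 \<or> \<delta> j j' = 1" for j j' by (simp add: \<delta>_def)
  have A: "(\<Sum>j\<in>J. c j * \<delta> j j0) = 0" if j0: "j0 \<in> J" for j0
  proof -
    have "0 = (\<Sum>T\<in>Pow {..<m}. bichar n m (gprod T (fgen g)) (e j0) *
                 (\<Sum>j\<in>J. c j * bichar n m (gprod T (fgen g)) (e j)))"
      using hyp by (auto intro!: sum.neutral[symmetric])
    also have "\<dots> = (\<Sum>T\<in>Pow {..<m}. \<Sum>j\<in>J. c j * bichar n m (gprod T (fgen g)) (mult (e j) (e j0)))"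
      by (simp add: sum_distrib_left bichar_mult mult_ac)
    also have "\<dots> = (\<Sum>j\<in>J. \<Sum>T\<in>Pow {..<m}. c j * bichar n m (gprod T (fgen g)) (mult (e j) (e j0)))"
      by (rule sum.swap)
    also have "\<dots> = (\<Sum>j\<in>J. c j * (\<Sum>T\<in>Pow {..<m}. bichar n m (gprod T (fgen g)) (mult (e j) (e j0))))"
      by (simp add: sum_distrib_left)
    also have "\<dots> = (\<Sum>j\<in>J. c j * (2 ^ m * \<delta> j j0))"
      by (rule sum.cong[OF refl]) (simp add: orth_M carrier_mult eG j0 \<delta>_def)
    also have "\<dots> = 2 ^ m * (\<Sum>j\<in>J. c j * \<delta> j j0)"
      by (simp add: sum_distrib_left mult_ac)
    finally show ?thesis by simp
  qed
  define N where "N j = (\<Sum>j'\<in>J. \<delta> j' j)" for j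
  have Npos: "N j \<ge> 1" if "j \<in> J" for j
  proof -
    have "\<delta> j j \<le> N j" unfolding N_def
      by (rule member_le_sum[OF that]) (simp_all add: \<delta>_def fin)
    thus ?thesis by (simp add: drefl)
  qed
  have Neq: "N j' = N j" if "\<delta> j j' = 1" for j j'
    unfolding N_def
  proof (rule sum.cong[OF refl])
    fix k
    have "\<delta> k j' = 1 \<longleftrightarrow> \<delta> k j = 1" using that dtrans dsym by metis
    thus "\<delta> k j' = \<delta> k j" using d01[of k j'] d01[of k j] by auto
  qed
  have one: "(\<Sum>j'\<in>J. \<delta> j j' / N j') = 1" if j: "j \<in> J" for j
  proof -
    have "(\<Sum>j'\<in>J. \<delta> j j' / N j') = (\<Sum>j'\<in>J. \<delta> j' j / N j)"
    proof (rule sum.cong[OF refl])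
      fix x
      show "\<delta> j x / N x = \<delta> x j / N j"
      proof (cases "\<delta> j x = 1")
        case True thus ?thesis using Neq[OF True] dsym[of j x] by simp
      next
        case False thus ?thesis using d01[of j x] dsym[of j x] by simp
      qed
    qed
    also have "\<dots> = (\<Sum>j'\<in>J. \<delta> j' j) / N j" by (rule sum_divide_distrib[symmetric])
    also have "\<dots> = N j / N j" unfolding N_def ..
    also have "\<dots> = 1" using Npos[OF j] by simp
    finally show ?thesis .
  qed
  have "(\<Sum>j\<in>J. c j * bichar n m u (e j)) = (\<Sum>j\<in>J. c j * bichar n m u (e j) * (\<Sum>j'\<in>J. \<delta> j j' / N j'))"
    by (rule sum.cong[OF refl]) (simp add: one)
  also have "\<dots> = (\<Sum>j\<in>J. \<Sum>j'\<in>J. c j * \<delta> j j' * (bichar n m u (e j') / N j'))"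
  proof (rule sum.cong[OF refl])
    fix j assume j: "j \<in> J"
    show "c j * bichar n m u (e j) * (\<Sum>j'\<in>J. \<delta> j j' / N j') = (\<Sum>j'\<in>J. c j * \<delta> j j' * (bichar n m u (e j') / N j'))"
      unfolding sum_distrib_left
    proof (rule sum.cong[OF refl])
      fix j' assume j': "j' \<in> J"
      show "c j * bichar n m u (e j) * (\<delta> j j' / N j') = c j * \<delta> j j' * (bichar n m u (e j') / N j')"
      proof (cases "\<delta> j j' = 1")
        case True
        hence "bichar n m u (e j) = bichar n m u (e j')" using cls j j' by (auto simp: \<delta>_def split: if_splits)
        thus ?thesis by simp
      next
        case False thus ?thesis using d01[of j j'] by simp
      qed
    qed
  qed
  also have "\<dots> = (\<Sum>j'\<in>J. (\<Sum>j\<in>J. c j * \<delta> j j') * (bichar n m u (e j') / N j'))"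
    by (subst sum.swap) (simp only: sum_distrib_right)
  also have "\<dots> = 0" by (simp add: A)
  finally show ?thesis .
qed

lemma supp_empty_ident:
  assumes c: "a \<in> carrier n m" and s: "supp n m a = {}" shows "a = ident"
proof -
  have "\<not> xp a i \<and> \<not> zp a i \<and> \<not> ep a i" for i
  proof -
    have "\<not> xp a i \<and> \<not> zp a i"
    proof (cases "i < n")
      case True thus ?thesis using s unfolding supp_def by blast
    next
      case False thus ?thesis using c unfolding carrier_def by auto
    qed
    moreover have "\<not> ep a i"
    proof (cases "i < m")
      case True thus ?thesis using s unfolding supp_def by blast
    next
      case False thus ?thesis using c unfolding carrier_def by auto
    qed
    ultimately show ?thesis by blast
  qed
  thus ?thesis by (simp add: pds_eq fun_eq_iff)
qed

lemma supp_finite: "finite (supp n m a)"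
  by (rule finite_subset[of _ "{..<n+m}"]) (auto simp: supp_def)

lemma distance_lemma:
  assumes stab: "stabilizer_group n S"
    and Sp: "u \<in> perp n m S"
    and a: "a \<in> H n m \<gamma>" and b: "b \<in> H n m \<gamma>'"
    and fg: "finite \<gamma>" "finite \<gamma>'"
    and cg: "card \<gamma> \<le> (code_distance n m S g - 1) div 2" "card \<gamma>' \<le> (code_distance n m S g - 1) div 2"
    and U: "mult a b \<in> Ugrp n m g"
  shows "bichar n m u a = bichar n m u b"
proof -
  let ?w = "mult a b" let ?d = "code_distance n m S g"
  have wS: "?w \<in> S"
  proof (rule ccontr)
    assume nS: "?w \<notin> S"
    have wc: "?w \<in> carrier n m" using U U_carrier by blast
    have "supp n m ?w \<subseteq> \<gamma> \<union> \<gamma>'" using supp_mult[of n m a b] a b by (auto simp: H_def)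
    hence "card (supp n m ?w) \<le> card (\<gamma> \<union> \<gamma>')" using fg by (intro card_mono) auto
    also have "\<dots> \<le> card \<gamma> + card \<gamma>'" by (rule card_Un_le)
    finally have c1: "card (supp n m ?w) \<le> 2 * ((?d - 1) div 2)" using cg by linarith
    have "?d \<le> weight n m ?w" unfolding code_distance_def
      by (rule cInf_lower) (use U nS in auto)
    hence c2: "?d \<le> card (supp n m ?w)" by (simp add: weight_def)
    show False
    proof (cases "card (supp n m ?w) = 0")
      case True
      hence "?w = ident" using supp_finite supp_empty_ident[OF wc] by auto
      thus False using nS stab by (simp add: stabilizer_group_def)
    next
      case False
      thus False using c1 c2 by linarith
    qed
  qed
  have "bichar n m u ?w = 1" using Sp wS by (auto simp: perp_def)
  hence "bichar n m u a * bichar n m u b = 1" by (simp add: bichar_mult)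
  thus ?thesis using bichar_pm[of n m u a] bichar_pm[of n m u b] by auto
qed

lemma fourier_inv:
  assumes a: "a \<in> carrier n m"
  shows "(\<Sum>u\<in>carrier n m. bichar n m u a * synd_stat n m R u) = real (card (carrier n m)) * R a"
proof -
  let ?G = "carrier n m"
  have "(\<Sum>u\<in>?G. bichar n m u a * synd_stat n m R u) = (\<Sum>u\<in>?G. \<Sum>b\<in>?G. R b * bichar n m u (mult a b))"
    by (simp add: synd_stat_def sum_distrib_left bichar_mult mult_ac)
  also have "\<dots> = (\<Sum>b\<in>?G. R b * (\<Sum>u\<in>?G. bichar n m u (mult a b)))"
    by (subst sum.swap) (simp add: sum_distrib_left)
  also have "\<dots> = (\<Sum>b\<in>?G. R b * (if a = b then real (card ?G) else 0))"
  proof (rule sum.cong[OF refl])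
    fix b assume b: "b \<in> ?G"
    have "(\<Sum>u\<in>?G. bichar n m u (mult a b)) = (if mult a b = ident then real (card ?G) else 0)"
      using char_sum_H[of "mult a b" n m UNIV] by (simp add: H_UNIV carrier_mult a b)
    thus "R b * (\<Sum>u\<in>?G. bichar n m u (mult a b)) = R b * (if a = b then real (card ?G) else 0)"
      by (simp add: mult_eq_ident)
  qed
  also have "\<dots> = real (card ?G) * R a"
    using a by (simp add: if_distrib[of "\<lambda>x. _ * x"] finite_carrier cong: if_cong)
  finally show ?thesis .
qed



lemma stab_carrier: "stabilizer_group n S \<Longrightarrow> S \<subseteq> carrier n m"
  by (auto simp: stabilizer_group_def carrier_def)

lemma stab_finite: "stabilizer_group n S \<Longrightarrow> finite S"
  using finite_carrier[of n 0] by (auto simp: stabilizer_group_def intro: finite_subset)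

lemma logical_eq:
  assumes stab: "stabilizer_group n S"
    and eq: "\<forall>u\<in>perp n m S. synd_stat n m P u = synd_stat n m Q u"
    and e: "e \<in> carrier n m"
  shows "logical_channel S P e = logical_channel S Q e"
proof -
  let ?G = "carrier n m"
  define R where "R a = P a - Q a" for a
  have FR: "synd_stat n m R u = synd_stat n m P u - synd_stat n m Q u" for u
    by (simp add: R_def synd_stat_def sum_subtractf right_diff_distrib)
  have SG: "S \<subseteq> ?G" using stab_carrier[OF stab] .
  have finS: "finite S" using stab_finite[OF stab] .
  have cG: "real (card ?G) > 0" using finite_carrier[of n m] ident_carrier[of n m]
    by (metis card_gt_0_iff empty_iff of_nat_0_less_iff)
  have Rinv: "R a = (1 / real (card ?G)) * (\<Sum>u\<in>?G. bichar n m u a * synd_stat n m R u)" if "a \<in> ?G" for a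
    using fourier_inv[OF that, of R] cG by simp
  have "(\<Sum>s\<in>S. R (mult e s)) = (\<Sum>s\<in>S. (1 / real (card ?G)) * (\<Sum>u\<in>?G. bichar n m u (mult e s) * synd_stat n m R u))"
    using SG e by (intro sum.cong[OF refl] Rinv) (auto intro: carrier_mult)
  also have "\<dots> = (1 / real (card ?G)) * (\<Sum>u\<in>?G. synd_stat n m R u * bichar n m u e * (\<Sum>s\<in>S. bichar n m u s))"
    by (simp add: sum_distrib_left sum_distrib_right bichar_mult mult_ac sum.swap[of _ S])
  also have "\<dots> = 0"
  proof -
    have "synd_stat n m R u * bichar n m u e * (\<Sum>s\<in>S. bichar n m u s) = 0" if u: "u \<in> ?G" for u
    proof (cases "u \<in> perp n m S")
      case True thus ?thesis using eq by (simp add: FR)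
    next
      case False
      then obtain s0 where s0: "s0 \<in> S" "bichar n m u s0 \<noteq> 1" using u by (auto simp: perp_def)
      hence s0': "bichar n m u s0 = -1" using bichar_pm by metis
      have "(\<Sum>s\<in>S. bichar n m u s) = 0"
        by (rule sum_flip_zero[OF finS _ s0(1)])
          (use stab in \<open>auto simp: stabilizer_group_def bichar_mult s0'\<close>)
      thus ?thesis by simp
    qed
    hence "(\<Sum>u\<in>?G. synd_stat n m R u * bichar n m u e * (\<Sum>s\<in>S. bichar n m u s)) = 0"
      by (intro sum.neutral) blast
    thus ?thesis by simp
  qed
  finally have "(\<Sum>s\<in>S. R (mult e s)) = 0" .
  hence "(\<Sum>s\<in>S. P (mult e s)) = (\<Sum>s\<in>S. Q (mult e s))" by (simp add: R_def sum_subtractf)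
  thus ?thesis by (simp add: logical_channel_def)
qed



lemma mu_H: "x \<in> H n m \<gamma> \<Longrightarrow> mu x \<in> H n m \<gamma>"
  by (auto simp: H_def carrier_def supp_def)

lemma mu_perp:
  assumes stab: "stabilizer_group n S" and u: "u \<in> perp n m S"
  shows "mu u \<in> perp n m S"
proof -
  have "bichar n m (mu u) s = 1" if s: "s \<in> S" for s
  proof -
    have "s \<in> carrier n 0" using stab s by (auto simp: stabilizer_group_def)
    hence "\<not> ep s i" for i by (auto simp: carrier_def)
    thus ?thesis by (simp add: bichar_def)
  qed
  thus ?thesis using u mu_carrier by (auto simp: perp_def)
qed

lemma sum_Sigma_bool:
  fixes f :: "nat set \<Rightarrow> pds \<Rightarrow> bool \<Rightarrow> real"
  assumes "finite \<Gamma>"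
  shows "(\<Sum>j\<in>Sigma \<Gamma> (\<lambda>\<gamma>. H n m \<gamma> \<times> (UNIV::bool set)). f (fst j) (fst (snd j)) (snd (snd j)))
       = (\<Sum>\<gamma>\<in>\<Gamma>. \<Sum>x\<in>H n m \<gamma>. f \<gamma> x True + f \<gamma> x False)"
proof -
  have "(\<Sum>j\<in>Sigma \<Gamma> (\<lambda>\<gamma>. H n m \<gamma> \<times> (UNIV::bool set)). f (fst j) (fst (snd j)) (snd (snd j)))
     = (\<Sum>\<gamma>\<in>\<Gamma>. \<Sum>y\<in>H n m \<gamma> \<times> (UNIV::bool set). f \<gamma> (fst y) (snd y))"
  proof -
    have "(\<Sum>j\<in>Sigma \<Gamma> (\<lambda>\<gamma>. H n m \<gamma> \<times> (UNIV::bool set)). f (fst j) (fst (snd j)) (snd (snd j)))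
       = (\<Sum>(\<gamma>,y)\<in>Sigma \<Gamma> (\<lambda>\<gamma>. H n m \<gamma> \<times> (UNIV::bool set)). f \<gamma> (fst y) (snd y))"
      by (simp add: case_prod_beta')
    also have "\<dots> = (\<Sum>\<gamma>\<in>\<Gamma>. \<Sum>y\<in>H n m \<gamma> \<times> (UNIV::bool set). f \<gamma> (fst y) (snd y))"
      by (rule sum.Sigma[symmetric]) (auto simp: assms)
    finally show ?thesis .
  qed
  also have "\<dots> = (\<Sum>\<gamma>\<in>\<Gamma>. \<Sum>x\<in>H n m \<gamma>. \<Sum>b\<in>(UNIV::bool set). f \<gamma> x b)"
    by (rule sum.cong[OF refl]) (simp add: sum.cartesian_product case_prod_beta')
  also have "\<dots> = (\<Sum>\<gamma>\<in>\<Gamma>. \<Sum>x\<in>H n m \<gamma>. f \<gamma> x True + f \<gamma> x False)"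
    by (simp add: UNIV_bool add.commute)
  finally show ?thesis .
qed

theorem corollary2:
  fixes n m :: nat and S :: "pds set" and g :: "nat \<Rightarrow> pds"
    and \<Gamma> :: "nat set set" and Pf Qf :: "nat set \<Rightarrow> pds \<Rightarrow> real"
  assumes "stabilizer_group n S"
    and "\<forall>i<m. g i \<in> S"
    and "\<Gamma> \<subseteq> Pow {..<n + m}"
    and "\<forall>\<gamma>\<in>\<Gamma>. card \<gamma> \<le> (code_distance n m S g - 1) div 2"
    and "admissible n m \<Gamma> Pf"
    and "admissible n m \<Gamma> Qf"
    and "\<forall>s\<in>Mgrp m g.
           synd_stat n m (tilde n m (conv_family n m \<Gamma> Pf)) s
         = synd_stat n m (tilde n m (conv_family n m \<Gamma> Qf)) s"
  shows "\<forall>e\<in>carrier n m.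
           logical_channel S (conv_family n m \<Gamma> Pf) e
         = logical_channel S (conv_family n m \<Gamma> Qf) e"
proof -
  note stab = assms(1) and gS = assms(2) and GamP = assms(3) and cardG = assms(4)
    and admP = assms(5) and admQ = assms(6) and hyp = assms(7)
  let ?G = "carrier n m"
  let ?P = "conv_family n m \<Gamma> Pf" and ?Q = "conv_family n m \<Gamma> Qf"
  have finG: "finite \<Gamma>" using GamP by (rule finite_subset) simp
  have fing: "finite \<gamma>" if "\<gamma> \<in> \<Gamma>" for \<gamma> using GamP that by (auto intro: finite_subset)
  have Apos: "synd_stat n m (Pf \<gamma>) u > 0" if "\<gamma> \<in> \<Gamma>" for \<gamma> u
    using admP that by (intro synd_pos) (auto simp: admissible_def)
  have Bpos: "synd_stat n m (Qf \<gamma>) u > 0" if "\<gamma> \<in> \<Gamma>" for \<gamma> u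
    using admQ that by (intro synd_pos) (auto simp: admissible_def)
  have FP: "synd_stat n m ?P u = (\<Prod>\<gamma>\<in>\<Gamma>. synd_stat n m (Pf \<gamma>) u)" for u
    by (rule synd_conv_family[OF finG])
  have FQ: "synd_stat n m ?Q u = (\<Prod>\<gamma>\<in>\<Gamma>. synd_stat n m (Qf \<gamma>) u)" for u
    by (rule synd_conv_family[OF finG])
  have FPpos: "synd_stat n m ?P u > 0" for u unfolding FP using Apos by (intro prod_pos) auto
  have FQpos: "synd_stat n m ?Q u > 0" for u unfolding FQ using Bpos by (intro prod_pos) auto
  define D where "D \<gamma> u = ln (synd_stat n m (Pf \<gamma>) u) - ln (synd_stat n m (Qf \<gamma>) u)" for \<gamma> u
  have loc: "\<forall>u\<in>?G. D \<gamma> (proj n \<gamma> u) = D \<gamma> u" if "\<gamma> \<in> \<Gamma>" for \<gamma>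
  proof -
    have "\<forall>a. Pf \<gamma> a \<noteq> 0 \<longrightarrow> supp n m a \<subseteq> \<gamma>" "\<forall>a. Qf \<gamma> a \<noteq> 0 \<longrightarrow> supp n m a \<subseteq> \<gamma>"
      using admP admQ that by (auto simp: admissible_def)
    thus ?thesis by (simp add: D_def synd_local)
  qed
  have "\<forall>\<gamma>\<in>\<Gamma>. \<exists>c. \<forall>u\<in>?G. D \<gamma> u = (\<Sum>x\<in>H n m \<gamma>. c x * bichar n m u x)"
    using loc fourier_expand by blast
  then obtain cf where cf: "\<And>\<gamma> u. \<gamma> \<in> \<Gamma> \<Longrightarrow> u \<in> ?G \<Longrightarrow> D \<gamma> u = (\<Sum>x\<in>H n m \<gamma>. cf \<gamma> x * bichar n m u x)"
    by (metis bchoice)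
  define L where "L u = (\<Sum>\<gamma>\<in>\<Gamma>. D \<gamma> u)" for u
  have Lln: "L u = ln (synd_stat n m ?P u) - ln (synd_stat n m ?Q u)" for u
  proof -
    have "ln (synd_stat n m ?P u) = (\<Sum>\<gamma>\<in>\<Gamma>. ln (synd_stat n m (Pf \<gamma>) u))"
      unfolding FP using Apos by (intro ln_prod[OF finG]) (metis less_irrefl)
    moreover have "ln (synd_stat n m ?Q u) = (\<Sum>\<gamma>\<in>\<Gamma>. ln (synd_stat n m (Qf \<gamma>) u))"
      unfolding FQ using Bpos by (intro ln_prod[OF finG]) (metis less_irrefl)
    ultimately show ?thesis by (simp add: L_def D_def sum_subtractf)
  qed
  have fgenC: "fgen g t \<in> ?G" if "t < m" for t
  proof -
    have "g t \<in> carrier n 0" using gS stab that by (auto simp: stabilizer_group_def)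
    thus ?thesis using that by (auto simp: fgen_def carrier_def xp_def zp_def ep_def)
  qed
  have MG: "gprod T (fgen g) \<in> ?G" if "T \<subseteq> {..<m}" for T
    using that by (intro gprod_carrier) (auto intro: finite_subset fgenC)
  have hypL: "L s + L (mu s) = 0" if "s \<in> Mgrp m g" for s
  proof -
    have "synd_stat n m ?P s * synd_stat n m ?P (mu s) = synd_stat n m ?Q s * synd_stat n m ?Q (mu s)"
      using hyp that by (simp add: synd_tilde)
    hence e1: "ln (synd_stat n m ?P s * synd_stat n m ?P (mu s)) = ln (synd_stat n m ?Q s * synd_stat n m ?Q (mu s))"
      by simp
    have "synd_stat n m ?P s \<noteq> 0" "synd_stat n m ?P (mu s) \<noteq> 0"
         "synd_stat n m ?Q s \<noteq> 0" "synd_stat n m ?Q (mu s) \<noteq> 0"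
      using FPpos FQpos by (metis less_irrefl)+
    hence "ln (synd_stat n m ?P s) + ln (synd_stat n m ?P (mu s)) = ln (synd_stat n m ?Q s) + ln (synd_stat n m ?Q (mu s))"
      using e1 by (simp add: ln_mult)
    thus ?thesis by (simp add: Lln)
  qed
  define J where "J = Sigma \<Gamma> (\<lambda>\<gamma>. H n m \<gamma> \<times> (UNIV::bool set))"
  define c' where "c' j = cf (fst j) (fst (snd j))" for j :: "nat set \<times> pds \<times> bool"
  define e' where "e' j = (if snd (snd j) then mu (fst (snd j)) else fst (snd j))" for j :: "nat set \<times> pds \<times> bool"
  have finJ: "finite J" unfolding J_def using finG by (intro finite_SigmaI) auto
  have e'H: "e' j \<in> H n m (fst j)" if "j \<in> J" for j
    using that by (auto simp: J_def e'_def mu_H)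
  have e'G: "\<forall>j\<in>J. e' j \<in> ?G" using e'H H_carrier by blast
  have sumJ: "(\<Sum>j\<in>J. c' j * bichar n m u (e' j)) = L u + L (mu u)" if u: "u \<in> ?G" for u
  proof -
    have "(\<Sum>j\<in>J. c' j * bichar n m u (e' j)) =
        (\<Sum>\<gamma>\<in>\<Gamma>. \<Sum>x\<in>H n m \<gamma>. cf \<gamma> x * bichar n m u (mu x) + cf \<gamma> x * bichar n m u x)"
      unfolding J_def c'_def e'_def
      using sum_Sigma_bool[OF finG, where n=n and m=m and f="\<lambda>\<gamma> x b. cf \<gamma> x * bichar n m u (if b then mu x else x)"]
      by simp
    also have "\<dots> = (\<Sum>\<gamma>\<in>\<Gamma>. D \<gamma> (mu u) + D \<gamma> u)"
      by (rule sum.cong[OF refl])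
        (simp add: sum.distrib cf u mu_carrier bichar_mu)
    also have "\<dots> = L u + L (mu u)" by (simp add: L_def sum.distrib)
    finally show ?thesis .
  qed
  have Lzero: "L u + L (mu u) = 0" if u: "u \<in> perp n m S" for u
  proof -
    have uG: "u \<in> ?G" using u by (auto simp: perp_def)
    have "(\<Sum>j\<in>J. c' j * bichar n m u (e' j)) = 0"
    proof (rule core[OF finJ e'G])
      show "\<forall>T\<subseteq>{..<m}. (\<Sum>j\<in>J. c' j * bichar n m (gprod T (fgen g)) (e' j)) = 0"
      proof (intro allI impI)
        fix T assume T: "T \<subseteq> {..<m}"
        have "gprod T (fgen g) \<in> Mgrp m g" using T by (auto simp: Mgrp_def)
        thus "(\<Sum>j\<in>J. c' j * bichar n m (gprod T (fgen g)) (e' j)) = 0"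
          using sumJ[OF MG[OF T]] hypL by simp
      qed
      show "\<forall>j\<in>J. \<forall>j'\<in>J. mult (e' j) (e' j') \<in> Ugrp n m g \<longrightarrow> bichar n m u (e' j) = bichar n m u (e' j')"
      proof (intro ballI impI)
        fix j j' assume j: "j \<in> J" and j': "j' \<in> J" and U: "mult (e' j) (e' j') \<in> Ugrp n m g"
        have g1: "fst j \<in> \<Gamma>" "fst j' \<in> \<Gamma>" using j j' by (auto simp: J_def)
        show "bichar n m u (e' j) = bichar n m u (e' j')"
          by (rule distance_lemma[OF stab u e'H[OF j] e'H[OF j'] fing[OF g1(1)] fing[OF g1(2)] _ _ U])
            (use cardG g1 in auto)
      qed
    qed
    thus ?thesis using sumJ[OF uG] by simp
  qed
  have Feq: "synd_stat n m ?P u = synd_stat n m ?Q u" if u: "u \<in> perp n m S" for u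
  proof -
    have "L (mu u) + L (mu (mu u)) = 0" using Lzero[OF mu_perp[OF stab u]] .
    hence "L (mu u) = 0" by simp
    hence "L u = 0" using Lzero[OF u] by simp
    hence "ln (synd_stat n m ?P u) = ln (synd_stat n m ?Q u)" by (simp add: Lln)
    thus ?thesis using FPpos FQpos by simp
  qed
  show ?thesis using logical_eq[OF stab] Feq by blast
qed

end
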